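(* Let $X$ be a $T_0$ space that is $\operatorname{Irr}$-continuous and $k$-bounded sober. Then $\ll_{\operatorname{Irr}}$ has the interpolation property: whenever $z\ll_{\operatorname{Irr}} x$, there exists $y\in X$ with $z\ll_{\operatorname{Irr}} y\ll_{\operatorname{Irr}} x$.
   Context: For a topological space $X$, a nonempty subset $E$ is irreducible if whenever $E\subseteq A_1\cup A_2$ with $A_1,A_2$ closed, $E\subseteq A_1$ or $E\subseteq A_2$. The specialisation order is $x\le y$ iff $x\in\operatorname{cl}(\{y\})$; $\uparrow x=\{z:z\ge x\}$; $\bigvee$ denotes supremum in this order. $\operatorname{Irr}^+(X)$ is the set of irreducible subsets whose supremum exists. $X$ is $k$-bounded sober if every closed set $F\in\operatorname{Irr}^+(X)$ is the closure of a unique singleton. $x\ll_{\operatorname{Irr}} y$ iff for every $E\in\operatorname{Irr}^+(X)$ with $\bigvee E\ge y$, $E\cap\uparrow x\ne\emptyset$; $\twoheaddownarrow_{\operatorname{Irr}} x=\{y:y\ll_{\operatorname{Irr}} x\}$. $X$ is $\operatorname{Irr}$-continuous if for every $x$, $\twoheaddownarrow_{\operatorname{Irr}} x$ is irreducible and $x=\bigvee\twoheaddownarrow_{\operatorname{Irr}} x$. *)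

theory Defs
  imports "HOL-Analysis.Analysis"
begin

definition spec_le :: "'a topology \<Rightarrow> 'a \<Rightarrow> 'a \<Rightarrow> bool" where
  "spec_le X x y \<longleftrightarrow> x \<in> X closure_of {y}"

definition upset :: "'a topology \<Rightarrow> 'a \<Rightarrow> 'a set" where
  "upset X x = {z \<in> topspace X. spec_le X x z}"

definition is_sup :: "'a topology \<Rightarrow> 'a set \<Rightarrow> 'a \<Rightarrow> bool" where
  "is_sup X E s \<longleftrightarrow> s \<in> topspace X \<and> (\<forall>e\<in>E. spec_le X e s) \<and>
     (\<forall>u\<in>topspace X. (\<forall>e\<in>E. spec_le X e u) \<longrightarrow> spec_le X s u)"

definition irreducible_set :: "'a topology \<Rightarrow> 'a set \<Rightarrow> bool" where
  "irreducible_set X E \<longleftrightarrow> E \<noteq> {} \<and> E \<subseteq> topspace X \<and>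
     (\<forall>A1 A2. closedin X A1 \<and> closedin X A2 \<and> E \<subseteq> A1 \<union> A2 \<longrightarrow> E \<subseteq> A1 \<or> E \<subseteq> A2)"

definition Irr_plus :: "'a topology \<Rightarrow> 'a set set" where
  "Irr_plus X = {E. irreducible_set X E \<and> (\<exists>s. is_sup X E s)}"

definition k_bounded_sober :: "'a topology \<Rightarrow> bool" where
  "k_bounded_sober X \<longleftrightarrow> (\<forall>F. closedin X F \<and> F \<in> Irr_plus X \<longrightarrow>
     (\<exists>!x. x \<in> topspace X \<and> F = X closure_of {x}))"

definition irr_way_below :: "'a topology \<Rightarrow> 'a \<Rightarrow> 'a \<Rightarrow> bool" where
  "irr_way_below X x y \<longleftrightarrow> (\<forall>E\<in>Irr_plus X. (\<forall>s. is_sup X E s \<longrightarrow> spec_le X y s)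
      \<longrightarrow> E \<inter> upset X x \<noteq> {})"

definition irr_wb_set :: "'a topology \<Rightarrow> 'a \<Rightarrow> 'a set" where
  "irr_wb_set X x = {y \<in> topspace X. irr_way_below X y x}"

definition irr_continuous :: "'a topology \<Rightarrow> bool" where
  "irr_continuous X \<longleftrightarrow> (\<forall>x\<in>topspace X. irreducible_set X (irr_wb_set X x) \<and>
      is_sup X (irr_wb_set X x) x)"

end

theory Submission
  imports Defs
begin

lemma sl_closed: "closedin X A \<Longrightarrow> b \<in> A \<Longrightarrow> spec_le X a b \<Longrightarrow> a \<in> A"
  unfolding spec_le_def by (meson closure_of_minimal empty_subsetI insert_subset subsetD)

lemma sl_trans: "spec_le X a b \<Longrightarrow> spec_le X b c \<Longrightarrow> spec_le X a c"
  using sl_closed[of X "X closure_of {c}" b a] unfolding spec_le_def by simp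

lemma ub_closure: "\<forall>e\<in>E. spec_le X e u \<Longrightarrow> X closure_of E \<subseteq> X closure_of {u}"
  by (rule closure_of_minimal) (auto simp: spec_le_def)

lemma a1: "irreducible_set X E \<Longrightarrow> E \<subseteq> topspace X" unfolding irreducible_set_def by blast
lemma a2: "irreducible_set X E \<Longrightarrow> E \<noteq> {}" unfolding irreducible_set_def by blast
lemma a3: "is_sup X E y \<Longrightarrow> y \<in> topspace X" unfolding is_sup_def by blast
lemma a4: "is_sup X E y \<Longrightarrow> \<forall>e\<in>E. spec_le X e y" unfolding is_sup_def by blast
lemma a5: "irreducible_set X C \<Longrightarrow> is_sup X C y \<Longrightarrow> C \<in> Irr_plus X" unfolding Irr_plus_def by blast
lemma a6: "E \<subseteq> X closure_of E \<Longrightarrow> X closure_of E = X closure_of {c} \<Longrightarrow> \<forall>e\<in>E. spec_le X e c"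
  unfolding spec_le_def by blast

lemma irr_closure: "irreducible_set X E \<Longrightarrow> irreducible_set X (X closure_of E)"
proof -
  assume irr: "irreducible_set X E"
  have ECsub: "E \<subseteq> X closure_of E" using closure_of_subset a1[OF irr] .
  show ?thesis unfolding irreducible_set_def
  proof (intro conjI allI impI)
    show "X closure_of E \<noteq> {}" using ECsub a2[OF irr] by blast
    show "X closure_of E \<subseteq> topspace X" by (rule closure_of_subset_topspace)
  next
    fix A1 A2 assume h: "closedin X A1 \<and> closedin X A2 \<and> X closure_of E \<subseteq> A1 \<union> A2"
    have "E \<subseteq> A1 \<union> A2" using h ECsub by blast
    hence "E \<subseteq> A1 \<or> E \<subseteq> A2" using irr h unfolding irreducible_set_def by blast
    thus "X closure_of E \<subseteq> A1 \<or> X closure_of E \<subseteq> A2"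
      using h closure_of_minimal[of E A1 X] closure_of_minimal[of E A2 X] by blast
  qed
qed

lemma sup_closure: "irreducible_set X E \<Longrightarrow> is_sup X E y \<Longrightarrow> is_sup X (X closure_of E) y"
proof -
  assume irr: "irreducible_set X E" and sup: "is_sup X E y"
  have ECsub: "E \<subseteq> X closure_of E" using closure_of_subset a1[OF irr] .
  have Cy: "X closure_of E \<subseteq> X closure_of {y}" using ub_closure[OF a4[OF sup]] .
  show ?thesis unfolding is_sup_def
  proof (intro conjI ballI impI)
    show "y \<in> topspace X" using a3[OF sup] .
  next
    fix e assume "e \<in> X closure_of E" thus "spec_le X e y" using Cy unfolding spec_le_def by blast
  next
    fix u assume u: "u \<in> topspace X" "\<forall>e\<in>X closure_of E. spec_le X e u"
    hence "\<forall>e\<in>E. spec_le X e u" using ECsub by blast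
    thus "spec_le X y u" using sup u(1) unfolding is_sup_def by blast
  qed
qed

lemma sup_in_closure:
  assumes kb: "k_bounded_sober X" and irr: "irreducible_set X E" and sup: "is_sup X E y"
  shows "y \<in> X closure_of E"
proof -
  have ECsub: "E \<subseteq> X closure_of E" using closure_of_subset a1[OF irr] .
  have "X closure_of E \<in> Irr_plus X" using a5[OF irr_closure[OF irr] sup_closure[OF irr sup]] .
  hence "\<exists>!x. x \<in> topspace X \<and> X closure_of E = X closure_of {x}"
    using kb[unfolded k_bounded_sober_def, rule_format, of "X closure_of E"] by simp
  hence "\<exists>x. x \<in> topspace X \<and> X closure_of E = X closure_of {x}" by (rule ex1_implies_ex)
  then obtain c where c: "c \<in> topspace X" "X closure_of E = X closure_of {c}"
    by blast
  have "\<forall>e\<in>E. spec_le X e c" using a6[OF ECsub c(2)] .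
  hence "spec_le X y c" using sup c(1) unfolding is_sup_def by blast
  hence "y \<in> X closure_of {c}" unfolding spec_le_def .
  thus ?thesis using c(2) by simp
qed

lemma cont_at: "irr_continuous X \<Longrightarrow> x \<in> topspace X \<Longrightarrow>
   irreducible_set X (irr_wb_set X x) \<and> is_sup X (irr_wb_set X x) x"
  unfolding irr_continuous_def by blast

lemma wb_top: "y \<in> irr_wb_set X x \<Longrightarrow> y \<in> topspace X \<and> irr_way_below X y x"
  unfolding irr_wb_set_def by blast

theorem theorem3p5:
  fixes X :: "'a topology"
  assumes "t0_space X" and "irr_continuous X" and "k_bounded_sober X"
  shows "\<forall>x\<in>topspace X. \<forall>z\<in>topspace X. irr_way_below X z x \<longrightarrow>
           (\<exists>y\<in>topspace X. irr_way_below X z y \<and> irr_way_below X y x)"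
proof (intro ballI impI)
  fix x z assume xt: "x \<in> topspace X" and zt: "z \<in> topspace X" and zx: "irr_way_below X z x"
  let ?W = "irr_wb_set X"
  define E where "E = (\<Union>y\<in>?W x. ?W y)"
  have contx: "irreducible_set X (?W x)" "is_sup X (?W x) x"
    using cont_at[OF assms(2) xt] by blast+
  have Wtop: "\<And>y. ?W y \<subseteq> topspace X" using wb_top by (meson subsetI)
  have conty: "\<And>y. y \<in> ?W x \<Longrightarrow> irreducible_set X (?W y) \<and> is_sup X (?W y) y"
    using cont_at[OF assms(2) conjunct1[OF wb_top]] by blast
  have Etop: "E \<subseteq> topspace X" using Wtop unfolding E_def by blast
  have WxclE: "?W x \<subseteq> X closure_of E"
  proof
    fix y assume y: "y \<in> ?W x"
    have "y \<in> X closure_of ?W y" using sup_in_closure[OF assms(3)] conty[OF y] by blast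
    moreover have "X closure_of ?W y \<subseteq> X closure_of E"
      by (rule closure_of_mono) (use y in \<open>auto simp: E_def\<close>)
    ultimately show "y \<in> X closure_of E" by blast
  qed
  have Ele: "\<forall>w\<in>E. \<exists>y\<in>?W x. spec_le X w y"
  proof
    fix w assume "w \<in> E"
    then obtain y where y: "y \<in> ?W x" "w \<in> ?W y" unfolding E_def by blast
    have "is_sup X (?W y) y" using conty[OF y(1)] by blast
    hence "spec_le X w y" using y(2) unfolding is_sup_def by blast
    thus "\<exists>y\<in>?W x. spec_le X w y" using y(1) by blast
  qed
  have Ex: "\<forall>w\<in>E. spec_le X w x"
  proof
    fix w assume "w \<in> E"
    then obtain y where y: "y \<in> ?W x" "spec_le X w y" using Ele by blast
    have "spec_le X y x" using y(1) contx(2) unfolding is_sup_def by blast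
    thus "spec_le X w x" using y(2) sl_trans by metis
  qed
  have irrE: "irreducible_set X E"
    unfolding irreducible_set_def
  proof (intro conjI allI impI)
    obtain y where y: "y \<in> ?W x" using contx(1) unfolding irreducible_set_def by blast
    then obtain w where "w \<in> ?W y" using conty[OF y] unfolding irreducible_set_def by blast
    thus "E \<noteq> {}" using y unfolding E_def by blast
    show "E \<subseteq> topspace X" by fact
  next
    fix A1 A2 assume h: "closedin X A1 \<and> closedin X A2 \<and> E \<subseteq> A1 \<union> A2"
    hence "X closure_of E \<subseteq> A1 \<union> A2" by (simp add: closure_of_minimal closedin_Un)
    hence "?W x \<subseteq> A1 \<union> A2" using WxclE by blast
    hence "?W x \<subseteq> A1 \<or> ?W x \<subseteq> A2" using contx(1) h unfolding irreducible_set_def by blast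
    moreover have "\<And>A. closedin X A \<Longrightarrow> ?W x \<subseteq> A \<Longrightarrow> E \<subseteq> A"
    proof
      fix A w assume A: "closedin X A" "?W x \<subseteq> A" and "w \<in> E"
      then obtain y where y: "y \<in> ?W x" "spec_le X w y" using Ele by blast
      show "w \<in> A" using sl_closed[OF A(1) _ y(2)] y(1) A(2) by blast
    qed
    ultimately show "E \<subseteq> A1 \<or> E \<subseteq> A2" using h by blast
  qed
  have supE: "is_sup X E x"
    unfolding is_sup_def
  proof (intro conjI ballI impI)
    show "x \<in> topspace X" by fact
    show "\<And>e. e \<in> E \<Longrightarrow> spec_le X e x" using Ex by blast
  next
    fix u assume u: "u \<in> topspace X" "\<forall>e\<in>E. spec_le X e u"
    have "X closure_of E \<subseteq> X closure_of {u}" using ub_closure[OF u(2)] .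
    hence "\<forall>e\<in>?W x. spec_le X e u" using WxclE unfolding spec_le_def by blast
    thus "spec_le X x u" using contx(2) u(1) unfolding is_sup_def by blast
  qed
  have "E \<in> Irr_plus X" using irrE supE unfolding Irr_plus_def by blast
  moreover have "\<forall>s. is_sup X E s \<longrightarrow> spec_le X x s"
    using supE unfolding is_sup_def by blast
  ultimately have "E \<inter> upset X z \<noteq> {}" using zx unfolding irr_way_below_def by blast
  then obtain w y where y: "y \<in> ?W x" and w: "w \<in> ?W y" and zw: "spec_le X z w"
    unfolding E_def upset_def by blast
  have "irr_way_below X z y"
    unfolding irr_way_below_def
  proof (intro ballI impI)
    fix E' assume E': "E' \<in> Irr_plus X" "\<forall>s. is_sup X E' s \<longrightarrow> spec_le X y s"
    have "irr_way_below X w y" using wb_top[OF w] by blast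
    then obtain e where e: "e \<in> E'" "spec_le X w e" "e \<in> topspace X"
      using E' unfolding irr_way_below_def upset_def by blast
    hence "e \<in> upset X z" using sl_trans[OF zw e(2)] unfolding upset_def by blast
    thus "E' \<inter> upset X z \<noteq> {}" using e by blast
  qed
  moreover have "irr_way_below X y x" "y \<in> topspace X" using wb_top[OF y] by blast+
  ultimately show "\<exists>y\<in>topspace X. irr_way_below X z y \<and> irr_way_below X y x" by blast
qed

end
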